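(* Let $L$ be a layout. There exists a nested tuple morphism $f$ with $L_f=L$ if and only if $L$ is tractable.
   Context: A nested tuple (of positive integers) is a positive integer or a finite tuple of nested tuples; its flattening $X^\flat$ is the tuple of integer leaves left to right, $\mathrm{len}(X)$ its length and $\mathrm{entry}_i(X)$ its $i$-th entry. Congruent nested tuples share the same nesting pattern. A layout is $L=S:D$ with $S$ (positive entries) and $D$ (nonnegative entries) congruent nested tuples; $L^\flat=S^\flat:D^\flat$. $\langle n\rangle_*=\{*,1,\dots,n\}$. A nested tuple morphism $f:S\to T$ is given by a pointed map $\alpha:\langle\mathrm{len}(S)\rangle_*\to\langle\mathrm{len}(T)\rangle_*$ ($\alpha( * )=*$) such that each $j\ne*$ has at most one preimage and $\mathrm{entry}_i(S)=\mathrm{entry}_{\alpha(i)}(T)$ whenever $\alpha(i)\ne*$. With $T^\flat=(t_1,\dots,t_n)$, the encoded layout $L_f$ has shape $S$ and stride congruent to $S$ whose $i$-th flattened entry is $0$ if $\alpha(i)=*$ and $\prod_{j<\alpha(i)}t_j$ otherwise. Order pairs by $s:d\preceq s':d'$ iff $d<d'$ or ($d=d'$ and $s\le s'$); for a flat layout, $\mathrm{sort}$ stably reorders its modes into $\preceq$-nondecreasing order. A layout $L$ is tractable if, writing $\mathrm{sort}(L^\flat)=(s_1,\dots,s_m):(d_1,\dots,d_m)$, for each $1\le i<m$ either $d_i=0$ or $s_id_i$ divides $d_{i+1}$. *)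

theory Defs
  imports Main "HOL-Library.Product_Lexorder"
begin

datatype ntuple = Leaf nat | Node "ntuple list"

fun flat :: "ntuple \<Rightarrow> nat list" where
  "flat (Leaf n) = [n]"
| "flat (Node ts) = concat (map flat ts)"

definition len :: "ntuple \<Rightarrow> nat" where
  "len X = length (flat X)"

definition entry :: "nat \<Rightarrow> ntuple \<Rightarrow> nat" where
  "entry i X = flat X ! (i - 1)"

definition pos_tuple :: "ntuple \<Rightarrow> bool" where
  "pos_tuple X \<longleftrightarrow> (\<forall>x\<in>set (flat X). 0 < x)"

fun shape :: "ntuple \<Rightarrow> ntuple" where
  "shape (Leaf _) = Leaf 0"
| "shape (Node ts) = Node (map shape ts)"

definition congruent :: "ntuple \<Rightarrow> ntuple \<Rightarrow> bool" where
  "congruent X Y \<longleftrightarrow> shape X = shape Y"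

text \<open>A layout S:D is a pair (S, D); strides are naturals (nonnegative).\<close>
type_synonym layout = "ntuple \<times> ntuple"

definition is_layout :: "layout \<Rightarrow> bool" where
  "is_layout L \<longleftrightarrow> pos_tuple (fst L) \<and> congruent (fst L) (snd L)"

fun fill :: "ntuple \<Rightarrow> nat list \<Rightarrow> ntuple \<times> nat list"
and fill_list :: "ntuple list \<Rightarrow> nat list \<Rightarrow> ntuple list \<times> nat list" where
  "fill (Leaf _) ws = (Leaf (hd ws), tl ws)"
| "fill (Node ts) ws = (let (ts', r) = fill_list ts ws in (Node ts', r))"
| "fill_list [] ws = ([], ws)"
| "fill_list (t # ts) ws =
     (let (t', r) = fill t ws; (ts', r') = fill_list ts r in (t' # ts', r'))"

text \<open>Nested tuple morphism S \<rightarrow> T given by a pointed map alpha; the base point * is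
  represented by None, indices are 1-based.\<close>
definition is_morphism :: "ntuple \<Rightarrow> ntuple \<Rightarrow> (nat \<Rightarrow> nat option) \<Rightarrow> bool" where
  "is_morphism S T \<alpha> \<longleftrightarrow>
     (\<forall>i\<in>{1..len S}. \<forall>j. \<alpha> i = Some j \<longrightarrow> j \<in> {1..len T}) \<and>
     (\<forall>i\<in>{1..len S}. \<forall>i'\<in>{1..len S}. \<alpha> i \<noteq> None \<and> \<alpha> i = \<alpha> i' \<longrightarrow> i = i') \<and>
     (\<forall>i\<in>{1..len S}. \<forall>j. \<alpha> i = Some j \<longrightarrow> entry i S = entry j T)"

text \<open>The encoded layout L_f = S : D, D congruent to S with the prescribed flattening.\<close>
definition encoded_layout :: "ntuple \<Rightarrow> ntuple \<Rightarrow> (nat \<Rightarrow> nat option) \<Rightarrow> layout" where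
  "encoded_layout S T \<alpha> =
     (S, fst (fill S (map (\<lambda>i. case \<alpha> i of None \<Rightarrow> 0
                                        | Some j \<Rightarrow> prod_list (take (j - 1) (flat T)))
                         [1..<len S + 1])))"

text \<open>Sorting of a flat layout (list of modes (s,d)) by: (s,d) \<preceq> (s',d') iff d < d' or
  (d = d' and s \<le> s'); sort_key is stable.\<close>
definition sort_modes :: "(nat \<times> nat) list \<Rightarrow> (nat \<times> nat) list" where
  "sort_modes ms = sort_key (\<lambda>(s, d). (d, s)) ms"

definition tractable :: "layout \<Rightarrow> bool" where
  "tractable L \<longleftrightarrow>
     (let ms = sort_modes (zip (flat (fst L)) (flat (snd L)))
      in \<forall>i. i + 1 < length ms \<longrightarrow>
            snd (ms ! i) = 0 \<or> fst (ms ! i) * snd (ms ! i) dvd snd (ms ! (i + 1)))"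

end

theory Submission
  imports Defs "HOL-Combinatorics.List_Permutation"
begin

lemma shape_Leaf_iff: "shape Y = Leaf k \<longleftrightarrow> (\<exists>y. Y = Leaf y \<and> k = 0)"
  by (cases Y) auto

lemma shape_Node_iff: "shape Y = Node ss \<longleftrightarrow> (\<exists>us. Y = Node us \<and> ss = map shape us)"
  by (cases Y) auto

lemma map_shape_Cons: "(map shape (t # ts) = map shape us) \<longleftrightarrow> (\<exists>u us'. us = u # us' \<and> shape t = shape u \<and> map shape ts = map shape us')"
  by (cases us) auto

lemma fill_F:
  "len X \<le> length ws \<longrightarrow> flat (fst (fill X ws)) = take (len X) ws \<and> snd (fill X ws) = drop (len X) ws \<and> shape (fst (fill X ws)) = shape X"
  "length (concat (map flat ts)) \<le> length ws \<longrightarrow> concat (map flat (fst (fill_list ts ws))) = take (length (concat (map flat ts))) ws \<and> snd (fill_list ts ws) = drop (length (concat (map flat ts))) ws \<and> map shape (fst (fill_list ts ws)) = map shape ts"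
proof (induct X ws and ts ws rule: fill_fill_list.induct)
  case (1 x ws)
  then show ?case by (cases ws) (auto simp: len_def)
next
  case (2 ts ws)
  then show ?case by (auto simp: len_def split: prod.splits)
next
  case (3 ws)
  then show ?case by auto
next
  case (4 t ts ws)
  show ?case
  proof
    assume a: "length (concat (map flat (t # ts))) \<le> length ws"
    obtain t' r where tr: "fill t ws = (t', r)" by fastforce
    obtain ts' r' where tsr: "fill_list ts r = (ts', r')" by fastforce
    have h1: "flat t' = take (len t) ws" "r = drop (len t) ws" "shape t' = shape t"
      using 4(1) a tr by (auto simp: len_def)
    have h2: "concat (map flat ts') = take (length (concat (map flat ts))) r \<and> r' = drop (length (concat (map flat ts))) r \<and> map shape ts' = map shape ts"
      using 4(2)[OF tr[symmetric] refl] a tsr h1 by (auto simp: len_def)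
    show "concat (map flat (fst (fill_list (t # ts) ws))) = take (length (concat (map flat (t # ts)))) ws \<and>
        snd (fill_list (t # ts) ws) = drop (length (concat (map flat (t # ts)))) ws \<and>
        map shape (fst (fill_list (t # ts) ws)) = map shape (t # ts)"
      using h1 h2 tr tsr by (auto simp: len_def take_add add.commute)
  qed
qed

lemma fill_G:
  "\<forall>Y r. shape X = shape Y \<longrightarrow> ws = flat Y @ r \<longrightarrow> fill X ws = (Y, r)"
  "\<forall>us r. map shape ts = map shape us \<longrightarrow> ws = concat (map flat us) @ r \<longrightarrow> fill_list ts ws = (us, r)"
proof (induct X ws and ts ws rule: fill_fill_list.induct)
  case (1 x ws)
  show ?case
  proof (intro allI impI)
    fix Y r assume "shape (Leaf x) = shape Y" "ws = flat Y @ r"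
    then show "fill (Leaf x) ws = (Y, r)" by (cases Y) auto
  qed
next
  case (2 ts ws)
  show ?case
  proof (intro allI impI)
    fix Y r assume a: "shape (Node ts) = shape Y" "ws = flat Y @ r"
    then obtain us where "Y = Node us" "map shape ts = map shape us" by (cases Y) auto
    then show "fill (Node ts) ws = (Y, r)" using 2 a by auto
  qed
next
  case (3 ws)
  then show ?case by auto
next
  case (4 t ts ws)
  show ?case
  proof (intro allI impI)
    fix us r assume a: "map shape (t # ts) = map shape us" "ws = concat (map flat us) @ r"
    then obtain u us' where u: "us = u # us'" "shape t = shape u" "map shape ts = map shape us'"
      by (auto simp: map_shape_Cons)
    have f1: "fill t ws = (u, concat (map flat us') @ r)" using 4(1) a u by auto
    have f2: "fill_list ts (concat (map flat us') @ r) = (us', r)"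
      using 4(2)[OF f1[symmetric] refl] u by auto
    show "fill_list (t # ts) ws = (us, r)" using f1 f2 u by simp
  qed
qed

lemma prod_take_pos: "\<forall>x\<in>set ts. 0 < (x::nat) \<Longrightarrow> 0 < prod_list (take a ts)"
  by (induct ts arbitrary: a) (auto simp: take_Cons split: nat.splits)

lemma prod_take_Suc: "a < length ts \<Longrightarrow> prod_list (take (Suc a) ts) = prod_list (take a ts) * (ts ! a :: nat)"
  by (simp add: take_Suc_conv_app_nth)

lemma prod_take_dvd: "a \<le> b \<Longrightarrow> prod_list (take a ts) dvd (prod_list (take b ts) :: nat)"
proof -
  assume "a \<le> b"
  then have "take b ts = take a ts @ take (b - a) (drop a ts)"
    by (metis le_add_diff_inverse take_add)
  then show ?thesis by simp
qed

lemma prod_take_eq_one: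
  assumes pos: "\<forall>x\<in>set ts. 0 < (x::nat)" and ab: "b < a" "a \<le> length ts"
    and eq: "prod_list (take a ts) = prod_list (take b ts)"
  shows "ts ! b = 1"
proof -
  have "take a ts = take (Suc b) ts @ take (a - Suc b) (drop (Suc b) ts)"
    using ab by (metis Suc_leI le_add_diff_inverse take_add)
  then have "prod_list (take a ts) = prod_list (take b ts) * ts ! b * prod_list (take (a - Suc b) (drop (Suc b) ts))"
    using ab prod_take_Suc[of b ts] by simp
  moreover have "0 < prod_list (take b ts)" using pos prod_take_pos by blast
  moreover have "0 < prod_list (take (a - Suc b) (drop (Suc b) ts))"
    using pos prod_take_pos[of "drop (Suc b) ts"] by (meson in_set_dropD)
  ultimately show ?thesis using eq
    by (metis mult.assoc mult.right_neutral mult_cancel_left nat_0_less_mult_iff nat_mult_eq_1_iff less_not_refl2)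
qed

lemma pair_dvd:
  assumes pos: "\<forall>x\<in>set ts. 0 < (x::nat)" and ab: "a \<noteq> b" "a < length ts" "b < length ts"
    and le: "(prod_list (take a ts), ts ! a) \<le> (prod_list (take b ts), ts ! b)"
  shows "ts ! a * prod_list (take a ts) dvd prod_list (take b ts)"
proof (cases "a < b")
  case True
  then show ?thesis using prod_take_dvd[of "Suc a" b ts] prod_take_Suc[of a ts] ab
    by (simp add: mult.commute)
next
  case False
  then have ba: "b < a" using ab by simp
  have d1: "prod_list (take b ts) dvd prod_list (take a ts)" using ba prod_take_dvd by simp
  have "prod_list (take a ts) \<le> prod_list (take b ts)" using le by (auto simp: less_eq_prod_simp)
  moreover have "prod_list (take b ts) \<le> prod_list (take a ts)"
    using d1 prod_take_pos[OF pos, of a] by (simp add: dvd_imp_le)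
  ultimately have eq: "prod_list (take a ts) = prod_list (take b ts)" by simp
  then have "ts ! b = 1" using prod_take_eq_one[OF pos ba] ab by simp
  then have "ts ! a \<le> 1" using le eq by (auto simp: less_eq_prod_simp)
  moreover have "0 < ts ! a" using pos ab by simp
  ultimately have "ts ! a = 1" by simp
  then show ?thesis using eq by simp
qed

lemma forward_list:
  fixes ss ds ts :: "nat list" and \<alpha> :: "nat \<Rightarrow> nat option"
  assumes pos: "\<forall>x\<in>set ts. 0 < x"
   and len: "length ds = length ss"
   and rng: "\<forall>i\<in>{1..length ss}. \<forall>j. \<alpha> i = Some j \<longrightarrow> j \<in> {1..length ts}"
   and inj: "\<forall>i\<in>{1..length ss}. \<forall>i'\<in>{1..length ss}. \<alpha> i \<noteq> None \<and> \<alpha> i = \<alpha> i' \<longrightarrow> i = i'"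
   and ent: "\<forall>i\<in>{1..length ss}. \<forall>j. \<alpha> i = Some j \<longrightarrow> ss ! (i - 1) = ts ! (j - 1)"
   and ds: "ds = map (\<lambda>i. case \<alpha> i of None \<Rightarrow> 0 | Some j \<Rightarrow> prod_list (take (j - 1) ts)) [1..<length ss + 1]"
  shows "\<forall>i. i + 1 < length (sort_modes (zip ss ds)) \<longrightarrow> snd (sort_modes (zip ss ds) ! i) = 0 \<or>
     fst (sort_modes (zip ss ds) ! i) * snd (sort_modes (zip ss ds) ! i) dvd snd (sort_modes (zip ss ds) ! (i + 1))"
proof -
  let ?n = "length ss"
  have dsn: "ds ! p = (case \<alpha> (Suc p) of None \<Rightarrow> 0 | Some j \<Rightarrow> prod_list (take (j - 1) ts))" if "p < ?n" for p
    using that unfolding ds by (simp del: upt_Suc)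
  have pw: "ss ! p * ds ! p dvd ds ! q"
    if pq: "p < ?n" "q < ?n" "p \<noteq> q" and le: "(ds ! p, ss ! p) \<le> (ds ! q, ss ! q)" and nz: "ds ! p \<noteq> 0" for p q
  proof -
    obtain a where a: "\<alpha> (Suc p) = Some a" using nz dsn[OF pq(1)] by (cases "\<alpha> (Suc p)") auto
    show ?thesis
    proof (cases "\<alpha> (Suc q)")
      case None
      then show ?thesis using dsn[OF pq(2)] by simp
    next
      case (Some b)
      have ip: "Suc p \<in> {1..?n}" and iq: "Suc q \<in> {1..?n}" using pq by auto
      have ra: "a \<in> {1..length ts}" using rng[rule_format, OF ip a] .
      have rb: "b \<in> {1..length ts}" using rng[rule_format, OF iq Some] .
      have ab: "a \<noteq> b"
      proof
        assume "a = b"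
        then have e: "\<alpha> (Suc p) = \<alpha> (Suc q)" using a Some by simp
        have "Suc p \<in> {1..?n}" "Suc q \<in> {1..?n}" using pq by auto
        then have "Suc p = Suc q" using inj e a by blast
        then show False using pq by simp
      qed
      have sa: "ss ! p = ts ! (a - 1)" using ent[rule_format, OF ip a] by simp
      have sb: "ss ! q = ts ! (b - 1)" using ent[rule_format, OF iq Some] by simp
      have dp: "ds ! p = prod_list (take (a - 1) ts)" using dsn[OF pq(1)] a by simp
      have dq: "ds ! q = prod_list (take (b - 1) ts)" using dsn[OF pq(2)] Some by simp
      have "ts ! (a - 1) * prod_list (take (a - 1) ts) dvd prod_list (take (b - 1) ts)"
        apply (rule pair_dvd[OF pos])
        using ra rb ab le sa sb dp dq by auto
      then show ?thesis using sa dp dq by simp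
    qed
  qed
  define z where "z = zip ss ds"
  define ms where "ms = sort_modes z"
  have "mset z = mset ms" unfolding ms_def sort_modes_def by simp
  then obtain g where g: "bij_betw g {..<length ms} {..<length z}" "\<forall>i<length ms. ms ! i = z ! g i"
    using permutation_Ex_bij[of ms z] by (metis mset_eq_length)
  have lz: "length z = ?n" unfolding z_def using len by simp
  have srt: "sorted (map (\<lambda>(s, d). (d, s)) ms)" unfolding ms_def sort_modes_def by (rule sorted_sort_key)
  have "snd (ms ! i) = 0 \<or> fst (ms ! i) * snd (ms ! i) dvd snd (ms ! (i + 1))" if i: "i + 1 < length ms" for i
  proof -
    have "map (\<lambda>(s, d). (d, s)) ms ! i \<le> map (\<lambda>(s, d). (d, s)) ms ! (i+1)"
      using srt i unfolding sorted_iff_nth_mono by simp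
    then have "(\<lambda>(s, d). (d, s)) (ms ! i) \<le> (\<lambda>(s, d). (d, s)) (ms ! (i+1))"
      using i by simp
    moreover have gb: "g i \<noteq> g (i+1)" "g i < ?n" "g (i+1) < ?n"
    proof -
      have inj: "inj_on g {..<length ms}" and im: "g ` {..<length ms} = {..<?n}" using g(1) lz by (auto simp: bij_betw_def)
      show "g i \<noteq> g (i+1)" 
      proof
        assume "g i = g (i+1)"
        then have "i = i + 1" using inj i by (simp add: inj_on_def)
        then show False by simp
      qed
      show "g i < ?n" "g (i+1) < ?n" using im i by auto
    qed
    moreover have m1: "ms ! i = (ss ! g i, ds ! g i)" "ms ! (i+1) = (ss ! g (i+1), ds ! g (i+1))"
      using g i lz len gb unfolding z_def by auto
    ultimately show ?thesis using pw[of "g i" "g (i+1)"] by auto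
  qed
  then show ?thesis unfolding ms_def z_def by blast
qed

fun mk :: "nat \<Rightarrow> (nat \<times> nat) list \<Rightarrow> nat list" where
  "mk acc [] = []"
| "mk acc ((s, d) # r) = (if d = 0 then [1, 1] @ mk acc r else [d div acc, s] @ mk (d * s) r)"

lemma mk_length: "length (mk acc ms) = 2 * length ms"
  by (induct acc ms rule: mk.induct) auto

lemma mk_props:
  assumes "\<forall>x\<in>set ms. 0 < fst x"
    and "\<forall>k. k + 1 < length ms \<longrightarrow> snd (ms ! k) \<le> snd (ms ! (k + 1))"
    and "\<forall>k. k + 1 < length ms \<longrightarrow> snd (ms ! k) = 0 \<or> fst (ms ! k) * snd (ms ! k) dvd snd (ms ! (k + 1))"
    and "0 < acc"
    and "ms \<noteq> [] \<longrightarrow> (snd (hd ms) = 0 \<longrightarrow> acc = 1) \<and> (snd (hd ms) \<noteq> 0 \<longrightarrow> acc dvd snd (hd ms))"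
  shows "(\<forall>x\<in>set (mk acc ms). 0 < x) \<and>
         (\<forall>k<length ms. snd (ms ! k) \<noteq> 0 \<longrightarrow> mk acc ms ! (2 * k + 1) = fst (ms ! k) \<and>
              acc * prod_list (take (2 * k + 1) (mk acc ms)) = snd (ms ! k))"
  using assms
proof (induct ms arbitrary: acc)
  case Nil
  then show ?case by simp
next
  case (Cons m r)
  obtain s d where m: "m = (s, d)" by fastforce
  define acc' where "acc' = (if d = 0 then acc else d * s)"
  have s0: "0 < s" using Cons.prems(1) m by auto
  have sr: "\<forall>k. k + 1 < length r \<longrightarrow> snd (r ! k) \<le> snd (r ! (k + 1))"
    using Cons.prems(2) by (metis Suc_eq_plus1 length_Cons not_less_eq nth_Cons_Suc)
  have cr: "\<forall>k. k + 1 < length r \<longrightarrow> snd (r ! k) = 0 \<or> fst (r ! k) * snd (r ! k) dvd snd (r ! (k + 1))"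
    using Cons.prems(3) by (metis Suc_eq_plus1 length_Cons not_less_eq nth_Cons_Suc)
  have a0: "0 < acc'" using Cons.prems(4) s0 acc'_def by auto
  have ir: "r \<noteq> [] \<longrightarrow> (snd (hd r) = 0 \<longrightarrow> acc' = 1) \<and> (snd (hd r) \<noteq> 0 \<longrightarrow> acc' dvd snd (hd r))"
  proof
    assume rn: "r \<noteq> []"
    have h2: "d \<le> snd (hd r)" using Cons.prems(2)[rule_format, of 0] rn m by (cases r) auto
    have h3: "d = 0 \<or> s * d dvd snd (hd r)" using Cons.prems(3)[rule_format, of 0] rn m by (cases r) auto
    show "(snd (hd r) = 0 \<longrightarrow> acc' = 1) \<and> (snd (hd r) \<noteq> 0 \<longrightarrow> acc' dvd snd (hd r))"
    proof (cases "d = 0")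
      case True
      then show ?thesis using Cons.prems(5) m acc'_def by auto
    next
      case False
      then show ?thesis using h2 h3 acc'_def by (auto simp: mult.commute)
    qed
  qed
  have IH: "(\<forall>x\<in>set (mk acc' r). 0 < x) \<and>
         (\<forall>k<length r. snd (r ! k) \<noteq> 0 \<longrightarrow> mk acc' r ! (2 * k + 1) = fst (r ! k) \<and>
              acc' * prod_list (take (2 * k + 1) (mk acc' r)) = snd (r ! k))"
    using Cons.hyps[of acc'] Cons.prems(1) sr cr a0 ir by auto
  have mkeq: "mk acc (m # r) = (if d = 0 then 1 else d div acc) # (if d = 0 then 1 else s) # mk acc' r"
    using m acc'_def by simp
  have dv: "d \<noteq> 0 \<Longrightarrow> acc dvd d" using Cons.prems(5) m by simp
  have hpos: "d \<noteq> 0 \<Longrightarrow> 0 < d div acc" using dv Cons.prems(4)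
    by (metis dvd_div_mult_self gr0I mult_is_0)
  show ?case
  proof (intro conjI allI impI)
    show "\<forall>x\<in>set (mk acc (m # r)). 0 < x" using mkeq IH s0 hpos by auto
  next
    fix k assume k: "k < length (m # r)" and nz: "snd ((m # r) ! k) \<noteq> 0"
    show "mk acc (m # r) ! (2 * k + 1) = fst ((m # r) ! k)"
    proof (cases k)
      case 0 then show ?thesis using mkeq nz m by simp
    next
      case (Suc k')
      have "2 * k + 1 = Suc (Suc (2 * k' + 1))" using Suc by simp
      then show ?thesis using mkeq IH k nz Suc by simp
    qed
    show "acc * prod_list (take (2 * k + 1) (mk acc (m # r))) = snd ((m # r) ! k)"
    proof (cases k)
      case 0 then show ?thesis using mkeq nz m dv by simp
    next
      case (Suc k')
      have e: "2 * k + 1 = Suc (Suc (2 * k' + 1))" using Suc by simp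
      have "acc * prod_list (take (2 * k + 1) (mk acc (m # r))) =
            acc * ((if d = 0 then 1 else d div acc) * (if d = 0 then 1 else s)) * prod_list (take (2 * k' + 1) (mk acc' r))"
        unfolding e mkeq by simp
      also have "acc * ((if d = 0 then 1 else d div acc) * (if d = 0 then 1 else s)) = acc'"
        using dv acc'_def Cons.prems(5) m by auto
      finally show ?thesis using IH k nz Suc by simp
    qed
  qed
qed

lemma backward_list:
  fixes ss ds :: "nat list"
  assumes pos: "\<forall>x\<in>set ss. 0 < x"
   and len: "length ds = length ss"
   and tr: "\<forall>i. i + 1 < length (sort_modes (zip ss ds)) \<longrightarrow> snd (sort_modes (zip ss ds) ! i) = 0 \<or>
     fst (sort_modes (zip ss ds) ! i) * snd (sort_modes (zip ss ds) ! i) dvd snd (sort_modes (zip ss ds) ! (i + 1))"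
  shows "\<exists>ts \<alpha>. (\<forall>x\<in>set ts. 0 < x) \<and>
   (\<forall>i\<in>{1..length ss}. \<forall>j. \<alpha> i = Some j \<longrightarrow> j \<in> {1..length ts}) \<and>
   (\<forall>i\<in>{1..length ss}. \<forall>i'\<in>{1..length ss}. \<alpha> i \<noteq> None \<and> \<alpha> i = \<alpha> i' \<longrightarrow> i = i') \<and>
   (\<forall>i\<in>{1..length ss}. \<forall>j. \<alpha> i = Some j \<longrightarrow> ss ! (i - 1) = ts ! (j - 1)) \<and>
   ds = map (\<lambda>i. case \<alpha> i of None \<Rightarrow> 0 | Some j \<Rightarrow> prod_list (take (j - 1) ts)) [1..<length ss + 1]"
proof -
  let ?n = "length ss"
  define z where "z = zip ss ds"
  define ms where "ms = sort_modes z"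
  have "mset z = mset ms" unfolding ms_def sort_modes_def by simp
  then obtain f where f: "bij_betw f {..<length z} {..<length ms}" "\<forall>i<length z. z ! i = ms ! f i"
    using permutation_Ex_bij[of z ms] by blast
  have lz: "length z = ?n" unfolding z_def using len by simp
  have lms: "length ms = ?n" using \<open>mset z = mset ms\<close> lz by (metis mset_eq_length)
  have setms: "set ms = set z" using \<open>mset z = mset ms\<close> by (metis set_mset_mset)
  have p1: "\<forall>x\<in>set ms. 0 < fst x" using setms pos unfolding z_def by (auto dest: set_zip_leftD)
  have srt: "sorted (map (\<lambda>(s, d). (d, s)) ms)" unfolding ms_def sort_modes_def by (rule sorted_sort_key)
  have p2: "\<forall>k. k + 1 < length ms \<longrightarrow> snd (ms ! k) \<le> snd (ms ! (k + 1))"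
  proof (intro allI impI)
    fix k assume k: "k + 1 < length ms"
    have "map (\<lambda>(s, d). (d, s)) ms ! k \<le> map (\<lambda>(s, d). (d, s)) ms ! (k+1)"
      using srt k unfolding sorted_iff_nth_mono by simp
    then have "(\<lambda>(s, d). (d, s)) (ms ! k) \<le> (\<lambda>(s, d). (d, s)) (ms ! (k+1))" using k by simp
    then show "snd (ms ! k) \<le> snd (ms ! (k + 1))"
      by (cases "ms ! k"; cases "ms ! (k+1)") (auto simp: less_eq_prod_simp)
  qed
  have p3: "\<forall>k. k + 1 < length ms \<longrightarrow> snd (ms ! k) = 0 \<or> fst (ms ! k) * snd (ms ! k) dvd snd (ms ! (k + 1))"
    using tr unfolding ms_def z_def .
  define ts where "ts = mk 1 ms"
  have MK: "(\<forall>x\<in>set ts. 0 < x) \<and>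
         (\<forall>k<length ms. snd (ms ! k) \<noteq> 0 \<longrightarrow> ts ! (2 * k + 1) = fst (ms ! k) \<and>
              1 * prod_list (take (2 * k + 1) ts) = snd (ms ! k))"
    unfolding ts_def by (rule mk_props[OF p1 p2 p3]) auto
  have lts: "length ts = 2 * ?n" unfolding ts_def using mk_length lms by simp
  define \<alpha> where "\<alpha> i = (if i \<in> {1..?n} \<and> ds ! (i - 1) \<noteq> 0 then Some (2 * f (i - 1) + 2) else None)" for i
  have fb: "f p < ?n" if "p < ?n" for p using f(1) that lz lms by (auto simp: bij_betw_def)
  have zp: "ms ! f p = (ss ! p, ds ! p)" if "p < ?n" for p using f(2) that lz len unfolding z_def by simp
  show ?thesis
  proof (intro exI conjI)
    show "\<forall>x\<in>set ts. 0 < x" using MK by blast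
    show "\<forall>i\<in>{1..?n}. \<forall>j. \<alpha> i = Some j \<longrightarrow> j \<in> {1..length ts}"
    proof (intro ballI allI impI)
      fix i j assume i: "i \<in> {1..?n}" and a: "\<alpha> i = Some j"
      then have "j = 2 * f (i - 1) + 2" by (auto simp: \<alpha>_def split: if_splits)
      moreover have "f (i - 1) < ?n" using fb i by auto
      ultimately show "j \<in> {1..length ts}" using lts by auto
    qed
    show "\<forall>i\<in>{1..?n}. \<forall>i'\<in>{1..?n}. \<alpha> i \<noteq> None \<and> \<alpha> i = \<alpha> i' \<longrightarrow> i = i'"
    proof (intro ballI impI)
      fix i i' assume i: "i \<in> {1..?n}" and i': "i' \<in> {1..?n}" and a: "\<alpha> i \<noteq> None \<and> \<alpha> i = \<alpha> i'"
      then have "f (i - 1) = f (i' - 1)" by (auto simp: \<alpha>_def split: if_splits)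
      moreover have "inj_on f {..<length z}" using f(1) by (auto simp: bij_betw_def)
      ultimately have "i - 1 = i' - 1" using i i' lz by (auto simp: inj_on_def)
      then show "i = i'" using i i' by auto
    qed
    show "\<forall>i\<in>{1..?n}. \<forall>j. \<alpha> i = Some j \<longrightarrow> ss ! (i - 1) = ts ! (j - 1)"
    proof (intro ballI allI impI)
      fix i j assume i: "i \<in> {1..?n}" and a: "\<alpha> i = Some j"
      then have j: "j = 2 * f (i - 1) + 2" and nz: "ds ! (i - 1) \<noteq> 0" by (auto simp: \<alpha>_def split: if_splits)
      have p: "i - 1 < ?n" using i by auto
      have "ts ! (2 * f (i - 1) + 1) = fst (ms ! f (i - 1))" using MK fb[OF p] lms zp[OF p] nz by auto
      then show "ss ! (i - 1) = ts ! (j - 1)" using j zp[OF p] by simp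
    qed
    show "ds = map (\<lambda>i. case \<alpha> i of None \<Rightarrow> 0 | Some j \<Rightarrow> prod_list (take (j - 1) ts)) [1..<?n + 1]"
    proof (rule nth_equalityI)
      show "length ds = length (map (\<lambda>i. case \<alpha> i of None \<Rightarrow> 0 | Some j \<Rightarrow> prod_list (take (j - 1) ts)) [1..<?n + 1])"
        using len by (simp del: upt_Suc)
      fix p assume "p < length ds"
      then have p: "p < ?n" using len by simp
      have e: "map (\<lambda>i. case \<alpha> i of None \<Rightarrow> 0 | Some j \<Rightarrow> prod_list (take (j - 1) ts)) [1..<?n + 1] ! p
          = (case \<alpha> (Suc p) of None \<Rightarrow> 0 | Some j \<Rightarrow> prod_list (take (j - 1) ts))"
        using p by (simp del: upt_Suc)
      show "ds ! p = map (\<lambda>i. case \<alpha> i of None \<Rightarrow> 0 | Some j \<Rightarrow> prod_list (take (j - 1) ts)) [1..<?n + 1] ! p"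
      proof (cases "ds ! p = 0")
        case True
        then show ?thesis unfolding e by (simp add: \<alpha>_def)
      next
        case False
        have "\<alpha> (Suc p) = Some (2 * f p + 2)" using False p by (simp add: \<alpha>_def)
        moreover have "prod_list (take (2 * f p + 1) ts) = ds ! p"
          using MK fb[OF p] lms zp[OF p] False by auto
        ultimately show ?thesis unfolding e by simp
      qed
    qed
  qed
qed

lemma flat_shape: "flat (shape X) = map (\<lambda>_. 0) (flat X)"
proof (induct X)
  case (Leaf x) then show ?case by simp
next
  case (Node ts)
  have "map (flat \<circ> shape) ts = map (map (\<lambda>_. 0) \<circ> flat) ts"
    by (rule map_cong) (simp_all add: Node)
  then have "concat (map (flat \<circ> shape) ts) = concat (map (map (\<lambda>_. 0) \<circ> flat) ts)" by (rule arg_cong)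
  then show ?case by (simp add: map_concat)
qed

lemma congruent_len: "congruent X Y \<Longrightarrow> length (flat X) = length (flat Y)"
  unfolding congruent_def by (metis flat_shape length_map)

lemma flat_leaves: "flat (Node (map Leaf ts)) = ts"
  by (induct ts) auto

lemma enc_iff:
  assumes c: "congruent S D" and l: "length ws = len S"
  shows "fst (fill S ws) = D \<longleftrightarrow> ws = flat D"
proof
  assume "fst (fill S ws) = D"
  then show "ws = flat D" using fill_F(1)[of S ws] l by simp
next
  assume "ws = flat D"
  then have "fill S (flat D @ []) = (D, [])" using fill_G(1)[of S "flat D @ []"] c
    unfolding congruent_def by blast
  then show "fst (fill S ws) = D" using \<open>ws = flat D\<close> by simp
qed

theorem mainTheorem9:
  fixes L :: layout
  assumes "is_layout L"
  shows "(\<exists>T \<alpha>. pos_tuple T \<and> is_morphism (fst L) T \<alpha> \<and> encoded_layout (fst L) T \<alpha> = L)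
         \<longleftrightarrow> tractable L"
proof -
  obtain S D where L: "L = (S, D)" by fastforce
  have posS: "\<forall>x\<in>set (flat S). 0 < x" and c: "congruent S D"
    using assms L by (auto simp: is_layout_def pos_tuple_def)
  have lenD: "length (flat D) = length (flat S)" using congruent_len[OF c] by simp
  have encI: "encoded_layout S T \<alpha> = L \<longleftrightarrow>
      flat D = map (\<lambda>i. case \<alpha> i of None \<Rightarrow> 0 | Some j \<Rightarrow> prod_list (take (j - 1) (flat T))) [1..<length (flat S) + 1]"
    for T \<alpha>
  proof -
    let ?ws = "map (\<lambda>i. case \<alpha> i of None \<Rightarrow> 0 | Some j \<Rightarrow> prod_list (take (j - 1) (flat T))) [1..<len S + 1]"
    have lw: "length ?ws = len S" by (simp del: upt_Suc)
    have "encoded_layout S T \<alpha> = L \<longleftrightarrow> fst (fill S ?ws) = D"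
      unfolding encoded_layout_def L by simp
    also have "\<dots> \<longleftrightarrow> ?ws = flat D" by (rule enc_iff[OF c lw])
    finally show ?thesis unfolding len_def by (simp del: upt_Suc) (metis)
  qed
  have morI: "is_morphism S T \<alpha> \<longleftrightarrow>
     (\<forall>i\<in>{1..length (flat S)}. \<forall>j. \<alpha> i = Some j \<longrightarrow> j \<in> {1..length (flat T)}) \<and>
     (\<forall>i\<in>{1..length (flat S)}. \<forall>i'\<in>{1..length (flat S)}. \<alpha> i \<noteq> None \<and> \<alpha> i = \<alpha> i' \<longrightarrow> i = i') \<and>
     (\<forall>i\<in>{1..length (flat S)}. \<forall>j. \<alpha> i = Some j \<longrightarrow> flat S ! (i - 1) = flat T ! (j - 1))" for T \<alpha>
    unfolding is_morphism_def len_def entry_def by simp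
  have trI: "tractable L \<longleftrightarrow> (\<forall>i. i + 1 < length (sort_modes (zip (flat S) (flat D))) \<longrightarrow> snd (sort_modes (zip (flat S) (flat D)) ! i) = 0 \<or>
     fst (sort_modes (zip (flat S) (flat D)) ! i) * snd (sort_modes (zip (flat S) (flat D)) ! i) dvd snd (sort_modes (zip (flat S) (flat D)) ! (i + 1)))"
    unfolding tractable_def L Let_def by simp
  show ?thesis
  proof
    assume "\<exists>T \<alpha>. pos_tuple T \<and> is_morphism (fst L) T \<alpha> \<and> encoded_layout (fst L) T \<alpha> = L"
    then obtain T \<alpha> where T: "pos_tuple T" "is_morphism S T \<alpha>" "encoded_layout S T \<alpha> = L"
      using L by auto
    have t1: "\<forall>x\<in>set (flat T). 0 < x" using T(1) unfolding pos_tuple_def .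
    have t2: "(\<forall>i\<in>{1..length (flat S)}. \<forall>j. \<alpha> i = Some j \<longrightarrow> j \<in> {1..length (flat T)}) \<and>
     (\<forall>i\<in>{1..length (flat S)}. \<forall>i'\<in>{1..length (flat S)}. \<alpha> i \<noteq> None \<and> \<alpha> i = \<alpha> i' \<longrightarrow> i = i') \<and>
     (\<forall>i\<in>{1..length (flat S)}. \<forall>j. \<alpha> i = Some j \<longrightarrow> flat S ! (i - 1) = flat T ! (j - 1))"
      using T(2) unfolding morI .
    have t3: "flat D = map (\<lambda>i. case \<alpha> i of None \<Rightarrow> 0 | Some j \<Rightarrow> prod_list (take (j - 1) (flat T))) [1..<length (flat S) + 1]"
      using T(3) unfolding encI .
    show "tractable L" unfolding trI
      using forward_list[OF t1 lenD _ _ _ t3] t2 by blast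
  next
    assume "tractable L"
    then obtain ts \<alpha> where ts: "(\<forall>x\<in>set ts. 0 < x) \<and>
   (\<forall>i\<in>{1..length (flat S)}. \<forall>j. \<alpha> i = Some j \<longrightarrow> j \<in> {1..length ts}) \<and>
   (\<forall>i\<in>{1..length (flat S)}. \<forall>i'\<in>{1..length (flat S)}. \<alpha> i \<noteq> None \<and> \<alpha> i = \<alpha> i' \<longrightarrow> i = i') \<and>
   (\<forall>i\<in>{1..length (flat S)}. \<forall>j. \<alpha> i = Some j \<longrightarrow> flat S ! (i - 1) = ts ! (j - 1)) \<and>
   flat D = map (\<lambda>i. case \<alpha> i of None \<Rightarrow> 0 | Some j \<Rightarrow> prod_list (take (j - 1) ts)) [1..<length (flat S) + 1]"
      using backward_list[OF posS lenD] unfolding trI by blast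
    define T where "T = Node (map Leaf ts)"
    have fT: "flat T = ts" unfolding T_def by (rule flat_leaves)
    have "pos_tuple T \<and> is_morphism S T \<alpha> \<and> encoded_layout S T \<alpha> = L"
      unfolding morI encI pos_tuple_def fT using ts by blast
    then show "\<exists>T \<alpha>. pos_tuple T \<and> is_morphism (fst L) T \<alpha> \<and> encoded_layout (fst L) T \<alpha> = L"
      using L by auto
  qed
qed

end
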